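(* Let $G$ be a connected edge-square finite simple graph of order $p$ and size $q$, with normal graph algebra $\mathcal{N}G$ over a field $\mathbb{F}$ of characteristic not $2$. Then $q=p-1$ or $q=p$, and: (1) if $q=p-1$, then $\mathcal{N}G$ is isomorphic (as a normal algebra) to $\mathbb{F}^0\oplus\mathcal{O}_{p-1}$, $\dim\mathrm{ann}\,G=1$, and $G$ is a tree; (2) if $q=p$, then $\mathcal{N}G$ is isomorphic to $\mathcal{O}_p$, $\dim\mathrm{ann}\,G=0$, and $G$ is unicyclic with an odd cycle.
   Context: A normal algebra is a finite-dimensional $\mathbb{F}$-vector space $\mathcal{N}=U\oplus\mathfrak{Z}$ with a commutative bilinear product such that $U\mathfrak{Z}=0$, $\mathfrak{Z}\mathfrak{Z}=0$, $UU\subseteq\mathfrak{Z}$; an isomorphism of normal algebras is a product-preserving linear bijection mapping $U$ onto $U'$ and $\mathfrak{Z}$ onto $\mathfrak{Z}'$; direct sums are taken componentwise. For a finite simple graph $G$ with vertex set $VG$ ($p=|VG|$) and edge set $EG$ ($q=|EG|$), the normal graph algebra $\mathcal{N}G$ has $U=U_G$ with basis $VG$ and $\mathfrak{Z}=\mathfrak{Z}_G$ with basis $EG$ (edge with endpoints $x,y$ written $[x,y]$), with product determined by: for distinct vertices $x,y$, $xy=[x,y]$ if adjacent and $0$ otherwise; $x^2=\sum_{y\sim x}[x,y]$. $G$ is edge-square if for every edge $\mathfrak{e}$ there is $u\in U_G$ with $u^2=\mathfrak{e}$. $\mathrm{ann}\,G=\{u\in U_G: uU_G=0\}$. $\mathbb{F}^0$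 is the normal algebra with $U=\mathbb{F}$, $\mathfrak{Z}=0$ and all products $0$. For $n\ge0$, $\mathcal{O}_n$ is the normal algebra with $U=\langle w_1,\dots,w_n\rangle$, $\mathfrak{Z}=\langle\mathfrak{z}_1,\dots,\mathfrak{z}_n\rangle$ (bases), $w_i^2=\mathfrak{z}_i$, $w_iw_j=0$ for $i\ne j$, and all other basis products $0$. A unicyclic graph is a connected graph with exactly one cycle. *)

theory Defs
  imports Main "HOL.Vector_Spaces" "HOL-Library.Function_Algebras"
begin

text \<open>A (finite-dimensional) normal algebra over a field 'f is described by a finite
index set UI (a basis of U), a finite index set ZI (a basis of Z) and structure
constants sc a b j (coefficient of basis vector j of Z in the product of basis
vectors a, b of U).  Elements of U (resp. Z) are coordinate functions vanishing
outside UI (resp. ZI).  The product U x U -> Z is the bilinear extension;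
all products involving Z are zero (by definition of a normal algebra).\<close>

record ('i, 'j, 'f) nalg =
  UI :: "'i set"
  ZI :: "'j set"
  sc :: "'i \<Rightarrow> 'i \<Rightarrow> 'j \<Rightarrow> 'f"

definition vecs :: "'i set \<Rightarrow> ('i \<Rightarrow> 'f::zero) set" where
  "vecs I = {u. \<forall>i. i \<notin> I \<longrightarrow> u i = 0}"

definition nprod :: "('i, 'j, 'f::comm_ring_1) nalg \<Rightarrow> ('i \<Rightarrow> 'f) \<Rightarrow> ('i \<Rightarrow> 'f) \<Rightarrow> ('j \<Rightarrow> 'f)" where
  "nprod A u w = (\<lambda>j. if j \<in> ZI A then (\<Sum>a\<in>UI A. \<Sum>b\<in>UI A. u a * w b * sc A a b j) else 0)"

definition is_normal_alg :: "('i, 'j, 'f::comm_ring_1) nalg \<Rightarrow> bool" where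
  "is_normal_alg A \<longleftrightarrow> finite (UI A) \<and> finite (ZI A) \<and>
     (\<forall>a b j. sc A a b j = sc A b a j)"

definition lin_on :: "'i set \<Rightarrow> (('i \<Rightarrow> 'f::comm_ring_1) \<Rightarrow> ('k \<Rightarrow> 'f)) \<Rightarrow> bool" where
  "lin_on I f \<longleftrightarrow> (\<forall>u\<in>vecs I. \<forall>w\<in>vecs I. f (u + w) = f u + f w) \<and>
                   (\<forall>c. \<forall>u\<in>vecs I. f (\<lambda>i. c * u i) = (\<lambda>k. c * f u k))"

definition nalg_iso :: "('i, 'j, 'f::comm_ring_1) nalg \<Rightarrow> ('k, 'l, 'f) nalg \<Rightarrow> bool" where
  "nalg_iso A B \<longleftrightarrow> (\<exists>f g.
      lin_on (UI A) f \<and> bij_betw f (vecs (UI A)) (vecs (UI B)) \<and>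
      lin_on (ZI A) g \<and> bij_betw g (vecs (ZI A)) (vecs (ZI B)) \<and>
      (\<forall>u\<in>vecs (UI A). \<forall>w\<in>vecs (UI A). g (nprod A u w) = nprod B (f u) (f w)))"

definition nalg_sum :: "('i, 'j, 'f::comm_ring_1) nalg \<Rightarrow> ('k, 'l, 'f) nalg \<Rightarrow> ('i + 'k, 'j + 'l, 'f) nalg" where
  "nalg_sum A B = \<lparr> UI = Inl ` UI A \<union> Inr ` UI B, ZI = Inl ` ZI A \<union> Inr ` ZI B,
     sc = (\<lambda>x y z. case (x, y, z) of
              (Inl a, Inl b, Inl j) \<Rightarrow> sc A a b j
            | (Inr a, Inr b, Inr j) \<Rightarrow> sc B a b j
            | _ \<Rightarrow> 0) \<rparr>"

definition F0 :: "(unit, nat, 'f::comm_ring_1) nalg" where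
  "F0 = \<lparr> UI = {()}, ZI = {}, sc = (\<lambda>_ _ _. 0) \<rparr>"

definition On :: "nat \<Rightarrow> (nat, nat, 'f::comm_ring_1) nalg" where
  "On n = \<lparr> UI = {..<n}, ZI = {..<n}, sc = (\<lambda>a b j. if a = b \<and> b = j then 1 else 0) \<rparr>"

definition simple_graph :: "'v set \<Rightarrow> ('v \<Rightarrow> 'v \<Rightarrow> bool) \<Rightarrow> bool" where
  "simple_graph V E \<longleftrightarrow> finite V \<and> (\<forall>x y. E x y \<longrightarrow> x \<in> V \<and> y \<in> V \<and> x \<noteq> y \<and> E y x)"

definition edges :: "'v set \<Rightarrow> ('v \<Rightarrow> 'v \<Rightarrow> bool) \<Rightarrow> 'v set set" where
  "edges V E = {{x, y} | x y. x \<in> V \<and> y \<in> V \<and> E x y}"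

text \<open>Normal graph algebra: U has basis V, Z has basis the edges; for distinct x, y,
xy = [x,y] if adjacent and 0 otherwise; x^2 = sum of [x,y] over neighbours y.
Thus the coefficient of edge e in ab is 1 iff both a and b lie on e.\<close>

definition graph_alg :: "'v set \<Rightarrow> ('v \<Rightarrow> 'v \<Rightarrow> bool) \<Rightarrow> ('v, 'v set, 'f::comm_ring_1) nalg" where
  "graph_alg V E = \<lparr> UI = V, ZI = edges V E,
     sc = (\<lambda>a b e. if a \<in> e \<and> b \<in> e then 1 else 0) \<rparr>"

definition edge_square :: "'f::comm_ring_1 itself \<Rightarrow> 'v set \<Rightarrow> ('v \<Rightarrow> 'v \<Rightarrow> bool) \<Rightarrow> bool" where
  "edge_square _ V E \<longleftrightarrow> (\<forall>e\<in>edges V E. \<exists>u \<in> vecs V.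
      nprod (graph_alg V E :: ('v, 'v set, 'f) nalg) u u = (\<lambda>e'. if e' = e then 1 else 0))"

definition ann_graph :: "'f::comm_ring_1 itself \<Rightarrow> 'v set \<Rightarrow> ('v \<Rightarrow> 'v \<Rightarrow> bool) \<Rightarrow> ('v \<Rightarrow> 'f) set" where
  "ann_graph _ V E = {u \<in> vecs V. \<forall>w\<in>vecs V. nprod (graph_alg V E :: ('v, 'v set, 'f) nalg) u w = 0}"

definition fdim :: "('v \<Rightarrow> 'f::field) set \<Rightarrow> nat" where
  "fdim S = vector_space.dim (\<lambda>c (u::'v \<Rightarrow> 'f) x. c * u x) S"

definition is_walk :: "('v \<Rightarrow> 'v \<Rightarrow> bool) \<Rightarrow> 'v list \<Rightarrow> bool" where
  "is_walk E xs \<longleftrightarrow> xs \<noteq> [] \<and> (\<forall>i. Suc i < length xs \<longrightarrow> E (xs ! i) (xs ! Suc i))"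

definition connected_graph :: "'v set \<Rightarrow> ('v \<Rightarrow> 'v \<Rightarrow> bool) \<Rightarrow> bool" where
  "connected_graph V E \<longleftrightarrow> V \<noteq> {} \<and>
     (\<forall>x\<in>V. \<forall>y\<in>V. \<exists>xs. is_walk E xs \<and> hd xs = x \<and> last xs = y)"

text \<open>A cycle (as a subgraph, identified with its edge set) is given by a list of
k \<ge> 3 distinct vertices, consecutive ones adjacent and the last adjacent to the first.\<close>

definition cycle_edges :: "'v list \<Rightarrow> 'v set set" where
  "cycle_edges xs = {{xs ! i, xs ! ((Suc i) mod length xs)} | i. i < length xs}"

definition is_cycle_list :: "('v \<Rightarrow> 'v \<Rightarrow> bool) \<Rightarrow> 'v list \<Rightarrow> bool" where
  "is_cycle_list E xs \<longleftrightarrow> length xs \<ge> 3 \<and> distinct xs \<and>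
     (\<forall>i < length xs. E (xs ! i) (xs ! ((Suc i) mod length xs)))"

definition cycles :: "('v \<Rightarrow> 'v \<Rightarrow> bool) \<Rightarrow> 'v set set set" where
  "cycles E = {cycle_edges xs | xs. is_cycle_list E xs}"

definition is_tree :: "'v set \<Rightarrow> ('v \<Rightarrow> 'v \<Rightarrow> bool) \<Rightarrow> bool" where
  "is_tree V E \<longleftrightarrow> connected_graph V E \<and> cycles E = {}"

definition unicyclic :: "'v set \<Rightarrow> ('v \<Rightarrow> 'v \<Rightarrow> bool) \<Rightarrow> bool" where
  "unicyclic V E \<longleftrightarrow> connected_graph V E \<and> (\<exists>!C. C \<in> cycles E)"

end

theory Submission
  imports Defs
begin

interpretation fv: vector_space "\<lambda>(c::'f::field) (u::'i\<Rightarrow>'f) x. c * u x"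
  by unfold_locales (auto simp: fun_eq_iff algebra_simps)

lemma sum_app: "(sum g A) x = (\<Sum>a\<in>A. g a x)"
  by (induction A rule: infinite_finite_induct) auto

definition glin :: "(('i \<Rightarrow> 'f::field) \<Rightarrow> ('j \<Rightarrow> 'f)) \<Rightarrow> bool" where
  "glin f \<longleftrightarrow> (\<forall>u w. f (u + w) = f u + f w) \<and> (\<forall>c u. f (\<lambda>x. c * u x) = (\<lambda>y. c * f u y))"

lemma glin_add: "glin f \<Longrightarrow> f (u + w) = f u + f w"
  unfolding glin_def by blast

lemma glin_0: "glin f \<Longrightarrow> f 0 = 0"
proof -
  assume f: "glin f"
  have "f 0 = f (0 + 0)" by simp
  also have "\<dots> = f 0 + f 0" by (rule glin_add[OF f])
  finally show ?thesis by simp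
qed

lemma glin_scale: "glin f \<Longrightarrow> f (\<lambda>x. c * u x) = (\<lambda>y. c * f u y)"
  unfolding glin_def by blast

lemma glin_diff: "glin f \<Longrightarrow> f (u - w) = f u - f w"
proof -
  assume f: "glin f"
  have "f u = f ((u - w) + w)" by simp
  also have "\<dots> = f (u - w) + f w" by (rule glin_add[OF f])
  finally show ?thesis by (simp add: algebra_simps)
qed

lemma glin_sum: "glin f \<Longrightarrow> f (\<Sum>i\<in>I. g i) = (\<Sum>i\<in>I. f (g i))"
  by (induction I rule: infinite_finite_induct) (auto simp: glin_0 glin_add)

lemma glin_lin_on: "glin f \<Longrightarrow> lin_on A f"
  unfolding lin_on_def glin_def by blast

definition dlt :: "'i \<Rightarrow> 'i \<Rightarrow> 'f::field" where
  "dlt a = (\<lambda>i. if i = a then 1 else 0)"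

lemma vecs_0[simp]: "(0::'i\<Rightarrow>'f::field) \<in> vecs A" by (simp add: vecs_def)
lemma vecs_add: "(u::'i\<Rightarrow>'f::field) \<in> vecs A \<Longrightarrow> w \<in> vecs A \<Longrightarrow> u + w \<in> vecs A" by (simp add: vecs_def)
lemma vecs_diff: "(u::'i\<Rightarrow>'f::field) \<in> vecs A \<Longrightarrow> w \<in> vecs A \<Longrightarrow> u - w \<in> vecs A" by (simp add: vecs_def)
lemma vecs_scale: "(u::'i\<Rightarrow>'f::field) \<in> vecs A \<Longrightarrow> (\<lambda>x. c * u x) \<in> vecs A" by (simp add: vecs_def)
lemma vecs_dlt: "a \<in> A \<Longrightarrow> (dlt a :: 'i \<Rightarrow> 'f::field) \<in> vecs A" by (simp add: vecs_def dlt_def)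
lemma vecs_sum: "(\<And>i. i \<in> I \<Longrightarrow> (g i :: 'j \<Rightarrow> 'f::field) \<in> vecs A) \<Longrightarrow> (\<Sum>i\<in>I. g i) \<in> vecs A"
  by (induction I rule: infinite_finite_induct) (auto simp: vecs_add)

lemma vecs_expand:
  assumes "finite A" "v \<in> vecs A"
  shows "v = (\<Sum>a\<in>A. (\<lambda>x. v a * dlt a x))"
proof
  fix i
  show "v i = (\<Sum>a\<in>A. (\<lambda>x. v a * dlt a x)) i"
    unfolding sum_app dlt_def using assms by (auto simp: vecs_def if_distrib cong: if_cong)
qed

lemma vecs_in_span:
  assumes "finite A" "v \<in> vecs A"
  shows "v \<in> fv.span ((\<lambda>a. dlt a :: 'i \<Rightarrow> 'f::field) ` A)"
proof -
  have "(\<Sum>a\<in>A. (\<lambda>x. v a * dlt a x)) \<in> fv.span ((\<lambda>a. dlt a) ` A)"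
    by (intro fv.span_sum fv.span_scale fv.span_base) auto
  then show ?thesis using vecs_expand[OF assms] by simp
qed

lemma dlt_inj: "inj (dlt :: 'i \<Rightarrow> 'i \<Rightarrow> 'f::field)"
proof (rule injI)
  fix a b :: 'i assume "(dlt a :: 'i \<Rightarrow> 'f) = dlt b"
  then have "(dlt a :: 'i \<Rightarrow> 'f) a = dlt b a" by simp
  then show "a = b" by (simp add: dlt_def split: if_splits)
qed

lemma dlt_indep: "finite A \<Longrightarrow> fv.independent ((\<lambda>a. dlt a :: 'i \<Rightarrow> 'f::field) ` A)"
proof (rule fv.independent_if_scalars_zero)
  fix f :: "('i \<Rightarrow> 'f) \<Rightarrow> 'f" and x :: "'i \<Rightarrow> 'f"
  assume A: "finite A" and s: "(\<Sum>x\<in>dlt ` A. (\<lambda>y. f x * x y)) = 0" and x: "x \<in> dlt ` A"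
  then obtain a where a: "a \<in> A" "x = dlt a" by auto
  have "0 = (\<Sum>x\<in>dlt ` A. (\<lambda>y. f x * x y)) a" using s by simp
  also have "\<dots> = (\<Sum>b\<in>A. f (dlt b) * dlt b a)"
    unfolding sum_app by (subst sum.reindex) (auto intro: inj_on_subset[OF dlt_inj])
  also have "\<dots> = (\<Sum>b\<in>A. if a = b then f (dlt b) else 0)"
    by (intro sum.cong) (auto simp: dlt_def)
  also have "\<dots> = f (dlt a)" using A a by simp
  finally show "f x = 0" using a by simp
qed (simp)

lemma card_le_inj:
  fixes f :: "('i \<Rightarrow> 'f::field) \<Rightarrow> ('j \<Rightarrow> 'f)"
  assumes A: "finite A" and B: "finite B" and f: "glin f"
    and into: "\<And>u. u \<in> vecs A \<Longrightarrow> f u \<in> vecs B"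
    and inj: "\<And>u. u \<in> vecs A \<Longrightarrow> f u = 0 \<Longrightarrow> u = 0"
  shows "card A \<le> card B"
proof -
  let ?T = "(\<lambda>a. f (dlt a)) ` A"
  have injA: "inj_on (\<lambda>a. f (dlt a)) A"
  proof (rule inj_onI)
    fix a b assume ab: "a \<in> A" "b \<in> A" "f (dlt a) = f (dlt b)"
    then have "f (dlt a - dlt b :: 'i \<Rightarrow> 'f) = 0" by (simp add: glin_diff[OF f])
    moreover have "(dlt a - dlt b :: 'i \<Rightarrow> 'f) \<in> vecs A" using ab by (intro vecs_diff vecs_dlt)
    ultimately have "(dlt a - dlt b :: 'i \<Rightarrow> 'f) = 0" using inj by blast
    then have "(dlt a :: 'i\<Rightarrow>'f) a = dlt b a" by simp
    then show "a = b" by (simp add: dlt_def split: if_splits)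
  qed
  have ind: "fv.independent ?T"
  proof (rule fv.independent_if_scalars_zero)
    show "finite ?T" using A by simp
    fix g :: "('j \<Rightarrow> 'f) \<Rightarrow> 'f" and x
    assume s: "(\<Sum>x\<in>?T. (\<lambda>y. g x * x y)) = 0" and x: "x \<in> ?T"
    then obtain a where a: "a \<in> A" "x = f (dlt a)" by auto
    let ?c = "\<Sum>b\<in>A. (\<lambda>y. g (f (dlt b)) * dlt b y)"
    have "f ?c = (\<Sum>b\<in>A. f (\<lambda>y. g (f (dlt b)) * dlt b y))" by (rule glin_sum[OF f])
    also have "\<dots> = (\<Sum>b\<in>A. (\<lambda>y. g (f (dlt b)) * f (dlt b) y))" by (simp add: glin_scale[OF f])
    also have "\<dots> = (\<Sum>x\<in>?T. (\<lambda>y. g x * x y))" by (subst sum.reindex[OF injA]) (simp add: comp_def)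
    finally have "f ?c = 0" using s by simp
    moreover have "?c \<in> vecs A" by (intro vecs_sum vecs_scale vecs_dlt)
    ultimately have "?c = 0" using inj by blast
    then have "?c a = 0" by simp
    then have "(\<Sum>b\<in>A. g (f (dlt b)) * dlt b a) = 0" by (simp add: sum_app)
    moreover have "(\<Sum>b\<in>A. g (f (dlt b)) * dlt b a) = (\<Sum>b\<in>A. if a = b then g (f (dlt b)) else 0)"
      by (intro sum.cong) (auto simp: dlt_def)
    ultimately show "g x = 0" using A a by simp
  qed
  have sub: "?T \<subseteq> fv.span ((\<lambda>b. dlt b) ` B)"
  proof
    fix x assume "x \<in> ?T"
    then obtain a where a: "a \<in> A" "x = f (dlt a)" by auto
    have "dlt a \<in> vecs A" using a(1) by (rule vecs_dlt)
    then have "f (dlt a) \<in> vecs B" by (rule into)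
    then show "x \<in> fv.span ((\<lambda>b. dlt b) ` B)" using a(2) vecs_in_span[OF B] by simp
  qed
  have "card ?T \<le> card ((\<lambda>b. dlt b :: 'j \<Rightarrow> 'f) ` B)"
    using fv.independent_span_bound[OF _ ind sub] B by simp
  moreover have "card ?T = card A" by (rule card_image[OF injA])
  moreover have "card ((\<lambda>b. dlt b :: 'j \<Rightarrow> 'f) ` B) = card B"
    by (rule card_image, rule inj_on_subset[OF dlt_inj], simp)
  ultimately show ?thesis by simp
qed

lemma card_le_surj:
  fixes f :: "('i \<Rightarrow> 'f::field) \<Rightarrow> ('j \<Rightarrow> 'f)"
  assumes A: "finite A" and B: "finite B" and f: "glin f"
    and onto: "\<And>z. z \<in> vecs B \<Longrightarrow> \<exists>u \<in> vecs A. f u = z"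
  shows "card B \<le> card A"
proof -
  let ?S = "(\<lambda>a. f (dlt a)) ` A"
  have sub: "(\<lambda>b. dlt b :: 'j \<Rightarrow> 'f) ` B \<subseteq> fv.span ?S"
  proof
    fix z assume "z \<in> (\<lambda>b. dlt b :: 'j \<Rightarrow> 'f) ` B"
    then have "z \<in> vecs B" using vecs_dlt by auto
    then obtain u where u: "u \<in> vecs A" "f u = z" using onto by blast
    have "f u = f (\<Sum>a\<in>A. (\<lambda>x. u a * dlt a x))" using vecs_expand[OF A u(1)] by simp
    also have "\<dots> = (\<Sum>a\<in>A. (\<lambda>x. u a * f (dlt a) x))" by (simp add: glin_sum[OF f] glin_scale[OF f])
    also have "\<dots> \<in> fv.span ?S" by (intro fv.span_sum fv.span_scale fv.span_base) auto
    finally show "z \<in> fv.span ?S" using u by simp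
  qed
  have "card ((\<lambda>b. dlt b :: 'j \<Rightarrow> 'f) ` B) \<le> card ?S"
    using fv.independent_span_bound[OF _ dlt_indep[OF B] sub] A by simp
  also have "\<dots> \<le> card A" by (rule card_image_le[OF A])
  moreover have "card ((\<lambda>b. dlt b :: 'j \<Rightarrow> 'f) ` B) = card B"
    by (rule card_image, rule inj_on_subset[OF dlt_inj], simp)
  ultimately show ?thesis by simp
qed

definition inc :: "'v set \<Rightarrow> ('v \<Rightarrow> 'v \<Rightarrow> bool) \<Rightarrow> ('v \<Rightarrow> 'f::field) \<Rightarrow> ('v set \<Rightarrow> 'f)" where
  "inc V E u = (\<lambda>e. if e \<in> edges V E then sum u e else 0)"

lemma glin_inc: "glin (inc V E)"
  unfolding glin_def inc_def by (auto simp: fun_eq_iff sum.distrib sum_distrib_left)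

lemma inc_vecs: "inc V E u \<in> vecs (edges V E)"
  by (simp add: inc_def vecs_def)

lemma edge_pair:
  assumes "simple_graph V E" "e \<in> edges V E"
  obtains x y where "e = {x,y}" "E x y" "x \<noteq> y" "x \<in> V" "y \<in> V"
  using assms unfolding simple_graph_def edges_def by blast

lemma edgesI: "simple_graph V E \<Longrightarrow> E x y \<Longrightarrow> {x,y} \<in> edges V E"
  unfolding simple_graph_def edges_def by blast

lemma edge_sub: "simple_graph V E \<Longrightarrow> e \<in> edges V E \<Longrightarrow> e \<subseteq> V"
  unfolding simple_graph_def edges_def by blast

lemma finite_edges: "simple_graph V E \<Longrightarrow> finite (edges V E)"
proof -
  assume G: "simple_graph V E"
  have "edges V E \<subseteq> Pow V" using edge_sub[OF G] by blast
  moreover have "finite V" using G by (simp add: simple_graph_def)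
  ultimately show ?thesis by (meson finite_Pow_iff finite_subset)
qed

lemma inc_edge: "simple_graph V E \<Longrightarrow> E x y \<Longrightarrow> inc V E u {x,y} = u x + u y"
  using edgesI[of V E x y] unfolding inc_def simple_graph_def by auto

lemma nprod_graph:
  fixes u w :: "'v \<Rightarrow> 'f::field"
  assumes G: "simple_graph V E"
  shows "nprod (graph_alg V E) u w = (\<lambda>e. inc V E u e * inc V E w e)"
proof
  fix e
  show "nprod (graph_alg V E) u w e = inc V E u e * inc V E w e"
  proof (cases "e \<in> edges V E")
    case False then show ?thesis by (simp add: nprod_def graph_alg_def inc_def)
  next
    case True
    have eV: "e \<subseteq> V" using edge_sub[OF G True] .
    have fV: "finite V" using G by (simp add: simple_graph_def)
    have Ve: "V \<inter> e = e" using eV by blast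
    have h: "\<And>g::'v \<Rightarrow> 'f. (\<Sum>a\<in>V. if a \<in> e then g a else 0) = sum g e"
      using sum.inter_restrict[OF fV] Ve by metis
    have "(\<Sum>a\<in>V. \<Sum>b\<in>V. u a * w b * (if a \<in> e \<and> b \<in> e then 1 else 0))
        = (\<Sum>a\<in>V. if a \<in> e then u a * sum w e else 0)"
    proof (rule sum.cong)
      fix a assume "a \<in> V"
      show "(\<Sum>b\<in>V. u a * w b * (if a \<in> e \<and> b \<in> e then 1 else 0)) = (if a \<in> e then u a * sum w e else 0)"
      proof (cases "a \<in> e")
        case True
        have "(\<Sum>b\<in>V. u a * w b * (if a \<in> e \<and> b \<in> e then 1 else 0)) = (\<Sum>b\<in>V. if b \<in> e then u a * w b else 0)"
          using True by (intro sum.cong) auto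
        also have "\<dots> = (\<Sum>b\<in>e. u a * w b)" by (rule h)
        finally show ?thesis using True by (simp add: sum_distrib_left)
      qed simp
    qed simp
    also have "\<dots> = (\<Sum>a\<in>e. u a * sum w e)" by (rule h)
    also have "\<dots> = sum u e * sum w e" by (simp add: sum_distrib_right)
    finally show ?thesis using True by (simp add: nprod_def graph_alg_def inc_def)
  qed
qed

lemma dlt_pair: "x \<noteq> y \<Longrightarrow> sum (dlt x :: 'v \<Rightarrow> 'f::field) {x, y} = 1"
  by (simp add: dlt_def)

lemma ann_eq:
  assumes G: "simple_graph V E"
  shows "ann_graph TYPE('f::field) V E = {u \<in> vecs V. inc V E u = (0 :: 'v set \<Rightarrow> 'f)}"
proof (intro set_eqI iffI)
  fix u :: "'v \<Rightarrow> 'f"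
  assume "u \<in> {u \<in> vecs V. inc V E u = 0}"
  then show "u \<in> ann_graph TYPE('f) V E"
    by (simp add: ann_graph_def nprod_graph[OF G] fun_eq_iff)
next
  fix u :: "'v \<Rightarrow> 'f"
  assume u: "u \<in> ann_graph TYPE('f) V E"
  have "inc V E u e = 0" for e
  proof (cases "e \<in> edges V E")
    case True
    then obtain x y where xy: "e = {x,y}" "E x y" "x \<noteq> y" "x \<in> V" "y \<in> V" using edge_pair[OF G] by blast
    have "(dlt x :: 'v \<Rightarrow> 'f) \<in> vecs V" using xy by (simp add: vecs_dlt)
    then have "nprod (graph_alg V E) u (dlt x) e = 0" using u by (simp add: ann_graph_def)
    then have "inc V E u e * inc V E (dlt x) e = 0" by (simp add: nprod_graph[OF G])
    moreover have "inc V E (dlt x) e = (1::'f)" using xy True by (simp add: inc_def dlt_def)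
    ultimately show ?thesis by simp
  qed (simp add: inc_def)
  then show "u \<in> {u \<in> vecs V. inc V E u = 0}" using u by (auto simp: ann_graph_def)
qed

lemma walk_rtrancl: "is_walk E xs \<Longrightarrow> E\<^sup>*\<^sup>* (hd xs) (last xs)"
proof (induction xs)
  case Nil then show ?case by (simp add: is_walk_def)
next
  case (Cons a xs)
  show ?case
  proof (cases "xs = []")
    case True then show ?thesis by simp
  next
    case False
    have w: "is_walk E xs" using Cons.prems False unfolding is_walk_def
      by (metis Suc_less_eq length_Cons nth_Cons_Suc)
    have "E a (hd xs)" using Cons.prems False unfolding is_walk_def
      by (metis hd_conv_nth length_Cons length_greater_0_conv nth_Cons_0 nth_Cons_Suc Suc_less_eq)
    then show ?thesis using Cons.IH[OF w] False by (simp add: converse_rtranclp_into_rtranclp)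
  qed
qed

lemma conn_reach: "connected_graph V E \<Longrightarrow> x \<in> V \<Longrightarrow> y \<in> V \<Longrightarrow> E\<^sup>*\<^sup>* x y"
  unfolding connected_graph_def using walk_rtrancl by metis

lemma reach_zero:
  fixes u :: "'v \<Rightarrow> 'f::field"
  assumes "R\<^sup>*\<^sup>* a b" "\<And>x y. R x y \<Longrightarrow> u x + u y = 0" "u a = 0"
  shows "u b = 0"
  using assms by (induction rule: rtranclp_induct) (auto simp: add_eq_0_iff)

lemma inc_zero_edge:
  assumes G: "simple_graph V E" and "inc V E u = 0" "E x y"
  shows "u x + u y = 0"
  using assms inc_edge[OF G, of x y u] by (metis zero_fun_apply)

lemma ker_zero:
  fixes u :: "'v \<Rightarrow> 'f::field"
  assumes G: "simple_graph V E" and R: "\<forall>x\<in>V. E\<^sup>*\<^sup>* v0 x" and u: "u \<in> vecs V" "inc V E u = 0" "u v0 = 0"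
  shows "u = 0"
proof
  fix x show "u x = 0 x"
  proof (cases "x \<in> V")
    case True then show ?thesis using reach_zero[of E v0 x u] R inc_zero_edge[OF G u(2)] u(3) by auto
  qed (use u in \<open>auto simp: vecs_def\<close>)
qed

lemma card_lower:
  fixes dummy :: "'f::field" and V :: "'v set"
  assumes G: "simple_graph V E" and v0: "v0 \<in> V" and R: "\<forall>x\<in>V. E\<^sup>*\<^sup>* v0 x"
  shows "card V \<le> card (edges V E) + 1"
proof -
  define f :: "('v \<Rightarrow> 'f) \<Rightarrow> ('v set option \<Rightarrow> 'f)" where
    "f = (\<lambda>u oo. case oo of None \<Rightarrow> u v0 | Some e \<Rightarrow> inc V E u e)"
  have fV: "finite V" using G by (simp add: simple_graph_def)
  have fE: "finite (edges V E)" using finite_edges[OF G] .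
  have gl: "glin f" unfolding glin_def f_def
    by (auto simp: fun_eq_iff glin_add[OF glin_inc] glin_scale[OF glin_inc] split: option.split)
  have "card V \<le> card (insert None (Some ` edges V E))"
  proof (rule card_le_inj[OF fV _ gl])
    show "finite (insert None (Some ` edges V E))" using fE by simp
    fix u :: "'v \<Rightarrow> 'f" assume u: "u \<in> vecs V"
    show "f u \<in> vecs (insert None (Some ` edges V E))"
      unfolding vecs_def f_def using inc_vecs[of V E u] by (auto simp: vecs_def split: option.split)
  next
    fix u :: "'v \<Rightarrow> 'f" assume u: "u \<in> vecs V"
    assume "f u = 0"
    then have "u v0 = 0" "inc V E u = 0"
      unfolding f_def by (metis option.simps(4) zero_fun_apply, auto simp: fun_eq_iff dest: spec[of _ "Some _"])
    then show "u = 0" using ker_zero[OF G R u] by simp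
  qed
  also have "\<dots> = card (edges V E) + 1" using fE by (simp add: card_image)
  finally show ?thesis .
qed

lemma surj_inc:
  fixes dummy :: "'f::field"
  assumes G: "simple_graph V E" and esq: "edge_square TYPE('f) V E"
    and z: "(z :: 'v set \<Rightarrow> 'f) \<in> vecs (edges V E)"
  shows "\<exists>u\<in>vecs V. inc V E u = z"
proof -
  have "\<exists>W. W \<in> vecs V \<and> inc V E W = (dlt e :: 'v set \<Rightarrow> 'f)" if e: "e \<in> edges V E" for e
  proof -
    obtain u :: "'v \<Rightarrow> 'f" where u: "u \<in> vecs V" "nprod (graph_alg V E) u u = (\<lambda>e'. if e' = e then 1 else 0)"
      using esq e unfolding edge_square_def by blast
    then have sq: "inc V E u e' * inc V E u e' = (if e' = e then 1 else 0)" for e'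
      by (metis nprod_graph[OF G])
    define s where "s = inc V E u e"
    have s: "s \<noteq> 0" using sq[of e] s_def by auto
    define W where "W = (\<lambda>x. (1/s) * u x)"
    have "inc V E W = (\<lambda>e'. (1/s) * inc V E u e')" unfolding W_def by (rule glin_scale[OF glin_inc])
    also have "\<dots> = dlt e"
    proof
      fix e' show "(1/s) * inc V E u e' = dlt e e'"
      proof (cases "e' = e")
        case True thus ?thesis using s by (simp add: dlt_def s_def)
      next
        case False
        then have "inc V E u e' * inc V E u e' = 0" using sq[of e'] by simp
        then have "inc V E u e' = 0" by simp
        thus ?thesis using False by (simp add: dlt_def)
      qed
    qed
    finally have "inc V E W = dlt e" .
    moreover have "W \<in> vecs V" unfolding W_def by (rule vecs_scale[OF u(1)])
    ultimately show ?thesis by blast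
  qed
  then obtain W where W: "\<And>e. e \<in> edges V E \<Longrightarrow> W e \<in> vecs V \<and> inc V E (W e) = (dlt e :: 'v set \<Rightarrow> 'f)"
    by metis
  define u where "u = (\<Sum>e\<in>edges V E. (\<lambda>x. z e * W e x))"
  have "u \<in> vecs V" unfolding u_def using W by (intro vecs_sum vecs_scale) auto
  moreover have "inc V E u = (\<Sum>e\<in>edges V E. (\<lambda>x. z e * dlt e x))"
    unfolding u_def by (simp add: glin_sum[OF glin_inc] glin_scale[OF glin_inc] W)
  moreover have "\<dots> = z" using vecs_expand[OF finite_edges[OF G] z] by simp
  ultimately show ?thesis by auto
qed

lemma sg_sym: "simple_graph V E \<Longrightarrow> E x y \<Longrightarrow> E y x"
  unfolding simple_graph_def by blast
lemma sg_V1: "simple_graph V E \<Longrightarrow> E x y \<Longrightarrow> x \<in> V"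
  unfolding simple_graph_def by blast
lemma sg_V2: "simple_graph V E \<Longrightarrow> E x y \<Longrightarrow> y \<in> V"
  unfolding simple_graph_def by blast
lemma sg_irr: "simple_graph V E \<Longrightarrow> E x y \<Longrightarrow> x \<noteq> y"
  unfolding simple_graph_def by blast
lemma sg_fin: "simple_graph V E \<Longrightarrow> finite V"
  unfolding simple_graph_def by blast

lemma cyc_edge:
  assumes "is_cycle_list E xs" "i < length xs"
  shows "E (xs ! i) (xs ! (Suc i mod length xs))"
  using assms unfolding is_cycle_list_def by blast

lemma cyc_len: "is_cycle_list E xs \<Longrightarrow> 3 \<le> length xs"
  unfolding is_cycle_list_def by blast

lemma cyc_edge_dist:
  assumes c: "is_cycle_list E xs" and i: "i < length xs" and j: "j < length xs"
    and eq: "{xs ! i, xs ! (Suc i mod length xs)} = {xs ! j, xs ! (Suc j mod length xs)}"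
  shows "i = j"
proof (rule ccontr)
  assume ij: "i \<noteq> j"
  let ?n = "length xs"
  have d: "distinct xs" and n: "3 \<le> ?n" using c unfolding is_cycle_list_def by auto
  have n0: "0 < ?n" by (rule less_le_trans[OF _ n]) simp
  have si: "Suc i mod ?n < ?n" using n0 by simp
  have sj: "Suc j mod ?n < ?n" using n0 by simp
  have "xs ! i \<noteq> xs ! j" using d i j ij by (simp add: nth_eq_iff_index_eq)
  then have "xs ! i = xs ! (Suc j mod ?n) \<and> xs ! (Suc i mod ?n) = xs ! j"
    using eq by (simp add: doubleton_eq_iff)
  then have a: "i = Suc j mod ?n" and b: "Suc i mod ?n = j"
    using nth_eq_iff_index_eq[OF d i sj] nth_eq_iff_index_eq[OF d si j] by auto
  show False
  proof (cases "Suc j < ?n")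
    case True
    then have ij1: "i = Suc j" using a by simp
    show False
    proof (cases "Suc (Suc j) < ?n")
      case True
      then have "Suc (Suc j) mod ?n = Suc (Suc j)" by simp
      then show False using b ij1 by simp
    next
      case False
      then have "Suc (Suc j) = ?n" using i ij1 by simp
      then have "j = 0" using b ij1 by simp
      then show False using \<open>Suc (Suc j) = ?n\<close> n by simp
    qed
  next
    case False
    then have sn: "Suc j = ?n" using j by simp
    then have "i = 0" using a by simp
    moreover have "Suc 0 mod ?n = 1" using n by simp
    ultimately have "j = 1" using b by simp
    then show False using sn n by simp
  qed
qed

lemma cycle_edges_img: "cycle_edges xs = (\<lambda>i. {xs ! i, xs ! (Suc i mod length xs)}) ` {..<length xs}"
  unfolding cycle_edges_def by auto

lemma card_cyc:
  assumes c: "is_cycle_list E xs"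
  shows "card (cycle_edges xs) = length xs"
proof -
  have "inj_on (\<lambda>i. {xs ! i, xs ! (Suc i mod length xs)}) {..<length xs}"
    by (rule inj_onI) (use cyc_edge_dist[OF c] in auto)
  then show ?thesis unfolding cycle_edges_img by (simp add: card_image)
qed

lemma alt:
  fixes f :: "'v \<Rightarrow> 'f::field"
  assumes h: "\<And>i. a \<le> i \<Longrightarrow> Suc i < n \<Longrightarrow> f (xs ! Suc i) = - f (xs ! i)"
  shows "a \<le> i \<Longrightarrow> i < n \<Longrightarrow> f (xs ! i) = (-1) ^ (i - a) * f (xs ! a)"
proof (induction i)
  case 0 then show ?case by simp
next
  case (Suc i)
  show ?case
  proof (cases "a = Suc i")
    case True then show ?thesis by simp
  next
    case False
    then have ai: "a \<le> i" using Suc.prems by simp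
    have "f (xs ! Suc i) = - f (xs ! i)" using h[OF ai] Suc.prems by simp
    also have "\<dots> = - ((-1) ^ (i - a) * f (xs ! a))" using Suc.IH ai Suc.prems by simp
    also have "\<dots> = (-1) ^ (Suc i - a) * f (xs ! a)" using ai by (simp add: Suc_diff_le)
    finally show ?thesis .
  qed
qed

lemma cyc_last:
  assumes c: "is_cycle_list E xs"
  shows "E (xs ! (length xs - 1)) (xs ! 0)"
proof -
  have n: "3 \<le> length xs" using cyc_len[OF c] .
  have "Suc (length xs - 1) = length xs" using n by simp
  then have "Suc (length xs - 1) mod length xs = 0" by simp
  then show ?thesis using cyc_edge[OF c, of "length xs - 1"] n by simp
qed

lemma cyc_mid:
  assumes c: "is_cycle_list E xs" and "Suc i < length xs"
  shows "E (xs ! i) (xs ! Suc i)"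
  using cyc_edge[OF c, of i] assms by simp

lemma odd_cycles:
  fixes dummy :: "'f::field" and V :: "'v set"
  assumes G: "simple_graph V E" and esq: "edge_square TYPE('f) V E" and c: "is_cycle_list E xs"
  shows "odd (length xs)"
proof
  assume ev: "even (length xs)"
  let ?n = "length xs"
  have n: "3 \<le> ?n" using cyc_len[OF c] .
  let ?e = "\<lambda>i. {xs ! i, xs ! (Suc i mod ?n)}"
  have e0: "?e 0 = {xs ! 0, xs ! 1}" using n by simp
  have E01: "E (xs ! 0) (xs ! 1)" using cyc_mid[OF c, of 0] n by simp
  have "?e 0 \<in> edges V E" using edgesI[OF G E01] e0 by simp
  then obtain u :: "'v \<Rightarrow> 'f" where u: "u \<in> vecs V" "nprod (graph_alg V E) u u = (\<lambda>e'. if e' = ?e 0 then 1 else 0)"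
    using esq unfolding edge_square_def by blast
  then have sq: "inc V E u e' * inc V E u e' = (if e' = ?e 0 then 1 else 0)" for e'
    by (metis nprod_graph[OF G])
  have zero: "u (xs ! i) + u (xs ! (Suc i mod ?n)) = 0" if "0 < i" "i < ?n" for i
  proof -
    have m1: "Suc 0 mod ?n = Suc 0" using n by simp
    have n0: "0 < ?n" by (rule less_le_trans[OF _ n]) simp
    have ne: "?e i \<noteq> ?e 0"
    proof
      assume "?e i = ?e 0"
      then have "i = 0" using cyc_edge_dist[OF c that(2) n0] by blast
      then show False using that(1) by simp
    qed
    have "inc V E u (?e i) = 0" using sq[of "?e i"] ne by simp
    then show ?thesis using inc_edge[OF G cyc_edge[OF c that(2)], of u] by simp
  qed
  have step: "u (xs ! Suc i) = - u (xs ! i)" if "1 \<le> i" "Suc i < ?n" for i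
    using zero[of i] that by (simp add: eq_neg_iff_add_eq_0 add.commute)
  have "u (xs ! (?n - 1)) = (-1) ^ (?n - 1 - 1) * u (xs ! 1)"
    by (rule alt[where f=u and xs=xs and a=1 and n="length xs", OF step]) (use n in auto)
  also have "(-1::'f) ^ (?n - 1 - 1) = 1" using ev n by (simp add: neg_one_even_power)
  finally have a: "u (xs ! (?n - 1)) = u (xs ! 1)" by simp
  have sn: "Suc (?n - 1) = ?n" using n by simp
  have "u (xs ! (?n - 1)) + u (xs ! (Suc (?n - 1) mod ?n)) = 0"
    using zero[of "?n - 1"] n by simp
  then have "u (xs ! (?n - 1)) + u (xs ! 0) = 0" using sn by simp
  then have "u (xs ! 0) + u (xs ! 1) = 0" using a by (simp add: add.commute)
  then have "inc V E u {xs ! 0, xs ! 1} = 0" using inc_edge[OF G E01, of u] by simp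
  then show False using sq[of "?e 0"] e0 by simp
qed

lemma odd_cycle_ker:
  fixes u :: "'v \<Rightarrow> 'f::field"
  assumes char: "(2::'f) \<noteq> 0" and G: "simple_graph V E" and conn: "connected_graph V E"
    and c: "is_cycle_list E xs" and od: "odd (length xs)"
    and u: "u \<in> vecs V" "inc V E u = 0"
  shows "u = 0"
proof -
  let ?n = "length xs"
  have n: "3 \<le> ?n" using cyc_len[OF c] .
  have step: "u (xs ! Suc i) = - u (xs ! i)" if "0 \<le> i" "Suc i < ?n" for i
  proof -
    have "E (xs ! i) (xs ! Suc i)" by (rule cyc_mid[OF c that(2)])
    then have "u (xs ! i) + u (xs ! Suc i) = 0" by (rule inc_zero_edge[OF G u(2)])
    then show ?thesis unfolding add_eq_0_iff .
  qed
  have a0: "u (xs ! (?n - 1)) = (-1) ^ (?n - 1 - 0) * u (xs ! 0)"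
    by (rule alt[where f=u and xs=xs and a=0 and n="length xs", OF step]) (use n in auto)
  have pw: "(-1::'f) ^ (?n - 1 - 0) = 1" using od n by (simp add: neg_one_even_power)
  have a: "u (xs ! (?n - 1)) = u (xs ! 0)" using a0 unfolding pw mult_1_left .
  have s: "u (xs ! (?n - 1)) + u (xs ! 0) = 0" using inc_zero_edge[OF G u(2) cyc_last[OF c]] .
  have s2: "u (xs ! 0) + u (xs ! 0) = 0" using s unfolding a .
  have "2 * u (xs ! 0) = 0" unfolding mult_2 by (rule s2)
  then have z: "u (xs ! 0) = 0" using char mult_eq_0_iff by blast
  have "E (xs ! 0) (xs ! Suc 0)" using cyc_mid[OF c, of 0] n by simp
  then have x0: "xs ! 0 \<in> V" by (rule sg_V1[OF G])
  have R: "\<forall>x\<in>V. E\<^sup>*\<^sup>* (xs ! 0) x" using conn_reach[OF conn x0] by simp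
  show ?thesis by (rule ker_zero[OF G R u z])
qed

definition rem :: "('v \<Rightarrow> 'v \<Rightarrow> bool) \<Rightarrow> 'v set \<Rightarrow> ('v \<Rightarrow> 'v \<Rightarrow> bool)" where
  "rem E e = (\<lambda>x y. E x y \<and> {x, y} \<noteq> e)"

lemma rem_simple:
  assumes G: "simple_graph V E" shows "simple_graph V (rem E e)"
proof -
  have key: "x \<in> V \<and> y \<in> V \<and> x \<noteq> y \<and> rem E e y x" if r: "rem E e x y" for x y
  proof -
    from r have xy: "E x y" "{x, y} \<noteq> e" by (auto simp: rem_def)
    have "E y x" by (rule sg_sym[OF G xy(1)])
    moreover have "{y, x} \<noteq> e" using xy(2) by (simp add: insert_commute)
    ultimately have "rem E e y x" by (simp add: rem_def)
    then show ?thesis using sg_V1[OF G xy(1)] sg_V2[OF G xy(1)] sg_irr[OF G xy(1)] by blast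
  qed
  show ?thesis unfolding simple_graph_def using sg_fin[OF G] key by blast
qed

lemma rem_edges: "edges V (rem E e) = edges V E - {e}"
  unfolding edges_def rem_def by auto

lemma rtranclp_sym:
  assumes "\<And>x y. R x y \<Longrightarrow> R y x" "R\<^sup>*\<^sup>* a b"
  shows "R\<^sup>*\<^sup>* b a"
  using assms(2) by (induction rule: rtranclp_induct) (auto intro: converse_rtranclp_into_rtranclp assms(1))

lemma path_reach:
  assumes h: "\<And>j. a \<le> j \<Longrightarrow> j < b \<Longrightarrow> R (xs ! j) (xs ! Suc j)"
  shows "a \<le> b \<Longrightarrow> R\<^sup>*\<^sup>* (xs ! a) (xs ! b)"
proof -
  have "a \<le> c \<Longrightarrow> c \<le> b \<Longrightarrow> R\<^sup>*\<^sup>* (xs ! a) (xs ! c)" for c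
  proof (induction c)
    case 0 then show ?case by simp
  next
    case (Suc c)
    show ?case
    proof (cases "a = Suc c")
      case True then show ?thesis by simp
    next
      case False
      then have ac: "a \<le> c" using Suc.prems by simp
      have "R\<^sup>*\<^sup>* (xs ! a) (xs ! c)" using Suc.IH ac Suc.prems by simp
      moreover have "R (xs ! c) (xs ! Suc c)" using h[of c] ac Suc.prems by simp
      ultimately show ?thesis by (rule rtranclp.rtrancl_into_rtrancl)
    qed
  qed
  then show "a \<le> b \<Longrightarrow> R\<^sup>*\<^sup>* (xs ! a) (xs ! b)" by simp
qed

lemma reach_mono:
  assumes "\<And>x y. E x y \<Longrightarrow> R\<^sup>*\<^sup>* x y" "E\<^sup>*\<^sup>* a b"
  shows "R\<^sup>*\<^sup>* a b"
  using assms(2) by (induction rule: rtranclp_induct) (auto intro: rtranclp_trans assms(1))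

lemma cycle_rem_reach:
  assumes G: "simple_graph V E" and c: "is_cycle_list E xs" and i: "i < length xs"
  defines "e \<equiv> {xs ! i, xs ! (Suc i mod length xs)}"
  shows "(rem E e)\<^sup>*\<^sup>* (xs ! i) (xs ! (Suc i mod length xs))"
proof -
  let ?n = "length xs"
  let ?R = "rem E e"
  have n: "3 \<le> ?n" using cyc_len[OF c] .
  have symR: "\<And>x y. ?R x y \<Longrightarrow> ?R y x" using sg_sym[OF rem_simple[OF G]] .
  have other: "?R (xs ! j) (xs ! (Suc j mod ?n))" if "j < ?n" "j \<noteq> i" for j
  proof -
    have "{xs ! j, xs ! (Suc j mod ?n)} \<noteq> e"
      using cyc_edge_dist[OF c that(1) i] that(2) unfolding e_def by auto
    then show ?thesis using cyc_edge[OF c that(1)] unfolding rem_def by simp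
  qed
  have otherS: "?R (xs ! j) (xs ! Suc j)" if "Suc j < ?n" "j \<noteq> i" for j
    using other[of j] that by simp
  show ?thesis
  proof (cases "Suc i = ?n")
    case True
    then have m: "Suc i mod ?n = 0" by simp
    have "?R\<^sup>*\<^sup>* (xs ! 0) (xs ! i)"
      by (rule path_reach[of 0 i]) (use otherS True in auto)
    then show ?thesis using m rtranclp_sym[of ?R, OF symR] by simp
  next
    case False
    then have si: "Suc i < ?n" using i by simp
    then have m: "Suc i mod ?n = Suc i" by simp
    have r1: "?R\<^sup>*\<^sup>* (xs ! Suc i) (xs ! (?n - 1))"
      by (rule path_reach) (use otherS si in auto)
    have sn0: "Suc (?n - 1) = ?n" using n by simp
    have sn: "Suc (?n - 1) mod ?n = 0" by (simp only: sn0 mod_self)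
    have r2: "?R (xs ! (?n - 1)) (xs ! 0)"
      using other[of "?n - 1"] si n sn by simp
    have r3: "?R\<^sup>*\<^sup>* (xs ! 0) (xs ! i)"
      by (rule path_reach) (use otherS si in auto)
    have "?R\<^sup>*\<^sup>* (xs ! Suc i) (xs ! i)"
      using r1 r2 r3 by (meson rtranclp.rtrancl_into_rtrancl rtranclp_trans)
    then show ?thesis using m rtranclp_sym[of ?R, OF symR] by simp
  qed
qed

lemma rem_reach:
  assumes G: "simple_graph V E" and c: "is_cycle_list E xs" and e: "e \<in> cycle_edges xs"
    and r: "E\<^sup>*\<^sup>* a b"
  shows "(rem E e)\<^sup>*\<^sup>* a b"
proof -
  obtain i where i: "i < length xs" "e = {xs ! i, xs ! (Suc i mod length xs)}"
    using e unfolding cycle_edges_def by blast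
  have symR: "\<And>x y. rem E e x y \<Longrightarrow> rem E e y x" using sg_sym[OF rem_simple[OF G]] .
  have cr: "(rem E e)\<^sup>*\<^sup>* (xs ! i) (xs ! (Suc i mod length xs))"
    using cycle_rem_reach[OF G c i(1)] i(2) by simp
  have "(rem E e)\<^sup>*\<^sup>* x y" if "E x y" for x y
  proof (cases "{x, y} = e")
    case False
    then have "rem E e x y" using that by (simp add: rem_def)
    then show ?thesis by (rule r_into_rtranclp)
  next
    case True
    then have "(x = xs ! i \<and> y = xs ! (Suc i mod length xs)) \<or> (y = xs ! i \<and> x = xs ! (Suc i mod length xs))"
      using i(2) by (auto simp: doubleton_eq_iff)
    then show ?thesis
    proof
      assume "x = xs ! i \<and> y = xs ! (Suc i mod length xs)"
      then show ?thesis using cr by simp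
    next
      assume "y = xs ! i \<and> x = xs ! (Suc i mod length xs)"
      then show ?thesis using rtranclp_sym[of "rem E e", OF symR cr] by simp
    qed
  qed
  then show ?thesis using reach_mono r by metis
qed

lemma rem_cycle:
  assumes c: "is_cycle_list E xs" and e: "e \<notin> cycle_edges xs"
  shows "is_cycle_list (rem E e) xs"
  using c e unfolding is_cycle_list_def rem_def cycle_edges_def by blast

lemma unique_bound:
  fixes dummy :: "'f::field" and V :: "'v set"
  assumes G: "simple_graph V E" and v0: "v0 \<in> V" and R: "\<forall>x\<in>V. E\<^sup>*\<^sup>* v0 x"
    and c1: "is_cycle_list E xs1" and c2: "is_cycle_list E xs2"
    and e1: "e \<in> cycle_edges xs1" and e2: "e \<notin> cycle_edges xs2"
  shows "card V + 1 \<le> card (edges V E)"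
proof -
  let ?E1 = "rem E e"
  have G1: "simple_graph V ?E1" by (rule rem_simple[OF G])
  have R1: "\<forall>x\<in>V. ?E1\<^sup>*\<^sup>* v0 x" using rem_reach[OF G c1 e1] R by blast
  have c2': "is_cycle_list ?E1 xs2" by (rule rem_cycle[OF c2 e2])
  have n2: "3 \<le> length xs2" using cyc_len[OF c2] .
  define f where "f = {xs2 ! 0, xs2 ! (Suc 0 mod length xs2)}"
  have f: "f \<in> cycle_edges xs2" unfolding f_def cycle_edges_def using n2 by auto
  let ?E2 = "rem ?E1 f"
  have G2: "simple_graph V ?E2" by (rule rem_simple[OF G1])
  have R2: "\<forall>x\<in>V. ?E2\<^sup>*\<^sup>* v0 x" using rem_reach[OF G1 c2' f] R1 by blast
  have cl: "card V \<le> card (edges V ?E2) + 1" by (rule card_lower[OF G2 v0 R2])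
  have eq: "edges V ?E2 = edges V E - {e} - {f}" by (simp add: rem_edges)
  have eE: "e \<in> edges V E"
  proof -
    obtain i where i: "i < length xs1" "e = {xs1 ! i, xs1 ! (Suc i mod length xs1)}"
      using e1 unfolding cycle_edges_def by blast
    show ?thesis using edgesI[OF G cyc_edge[OF c1 i(1)]] i(2) by simp
  qed
  have fE: "f \<in> edges V E - {e}"
  proof -
    have "?E1 (xs2 ! 0) (xs2 ! (Suc 0 mod length xs2))"
      by (rule cyc_edge[OF c2']) (rule less_le_trans[OF _ n2], simp)
    then have "f \<in> edges V ?E1" using edgesI[OF G1] f_def by blast
    then show ?thesis by (simp add: rem_edges)
  qed
  have fin: "finite (edges V E)" by (rule finite_edges[OF G])
  have "card {e, f} \<le> card (edges V E)"
    using eE fE fin by (intro card_mono) auto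
  moreover have "card {e, f} = 2"
  proof -
    have "f \<noteq> e" using fE by blast
    then show ?thesis by simp
  qed
  ultimately have q2: "2 \<le> card (edges V E)" by simp
  have "card (edges V ?E2) = card (edges V E) - 1 - 1"
    unfolding eq using eE fE fin by (simp add: card_Diff_singleton)
  then show ?thesis using cl q2 by linarith
qed

lemma maxpath_cycle:
  assumes fin: "finite V" and F: "\<And>x y. F x y \<Longrightarrow> x \<in> V \<and> y \<in> V \<and> x \<noteq> y \<and> F y x"
    and ab: "F a b" and deg: "\<And>x y. F x y \<Longrightarrow> \<exists>z. F y z \<and> z \<noteq> x"
  shows "\<exists>xs. is_cycle_list F xs"
proof -
  define P where "P ys \<longleftrightarrow> distinct ys \<and> 2 \<le> length ys \<and> set ys \<subseteq> V \<and>
      (\<forall>i. Suc i < length ys \<longrightarrow> F (ys ! i) (ys ! Suc i))" for ys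
  have Fab: "a \<in> V" "b \<in> V" "a \<noteq> b" using F[OF ab] by auto
  have "\<forall>i. Suc i < length [a, b] \<longrightarrow> F ([a, b] ! i) ([a, b] ! Suc i)"
  proof (intro allI impI)
    fix i assume "Suc i < length [a, b]"
    then have "i = 0" by simp
    then show "F ([a, b] ! i) ([a, b] ! Suc i)" using ab by simp
  qed
  then have Pab: "P [a, b]" unfolding P_def using Fab by auto
  have bound: "length ys < card V + 1" if "P ys" for ys
  proof -
    have "length ys = card (set ys)" using that by (simp add: P_def distinct_card)
    also have "\<dots> \<le> card V" using that fin by (intro card_mono) (auto simp: P_def)
    finally show ?thesis by simp
  qed
  obtain ys where ys: "P ys" and mx: "\<And>zs. P zs \<Longrightarrow> length zs \<le> length ys"
    using Lattices_Big.ex_has_greatest_nat[of P "[a, b]" length "card V + 1"] Pab bound by blast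
  have len: "2 \<le> length ys" and dys: "distinct ys" and sV: "set ys \<subseteq> V"
    and cons: "\<And>i. Suc i < length ys \<Longrightarrow> F (ys ! i) (ys ! Suc i)"
    using ys unfolding P_def by auto
  have "F (ys ! 0) (ys ! 1)" using cons[of 0] len by simp
  then have "F (ys ! 1) (ys ! 0)" using F by blast
  then obtain z where z: "F (ys ! 0) z" "z \<noteq> ys ! 1" using deg by blast
  have zF: "z \<in> V" "ys ! 0 \<noteq> z" "F z (ys ! 0)" using F[OF z(1)] by auto
  have "z \<in> set ys"
  proof (rule ccontr)
    assume nz: "z \<notin> set ys"
    have "P (z # ys)"
      unfolding P_def
    proof (intro conjI allI impI)
      show "distinct (z # ys)" using nz dys by simp
      show "2 \<le> length (z # ys)" using len by simp
      show "set (z # ys) \<subseteq> V" using sV zF by simp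
      fix i assume i: "Suc i < length (z # ys)"
      show "F ((z # ys) ! i) ((z # ys) ! Suc i)"
      proof (cases i)
        case 0 then show ?thesis using zF by simp
      next
        case (Suc k) then show ?thesis using i cons[of k] by simp
      qed
    qed
    then have "length (z # ys) \<le> length ys" by (rule mx)
    then show False by simp
  qed
  then obtain j where j: "j < length ys" "ys ! j = z" by (auto simp: in_set_conv_nth)
  have j0: "j \<noteq> 0"
  proof
    assume "j = 0"
    then show False using j zF(2) by simp
  qed
  have j1: "j \<noteq> 1" using j z by auto
  define cs where "cs = take (Suc j) ys"
  have lcs: "length cs = Suc j" using j by (simp add: cs_def)
  have "is_cycle_list F cs"
    unfolding is_cycle_list_def
  proof (intro conjI allI impI)
    show "3 \<le> length cs" using lcs j0 j1 by simp
    show "distinct cs" using dys by (simp add: cs_def)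
    fix i assume i: "i < length cs"
    show "F (cs ! i) (cs ! (Suc i mod length cs))"
    proof (cases "i < j")
      case True
      then have "Suc i mod length cs = Suc i" using lcs by simp
      moreover have "cs ! i = ys ! i" "cs ! Suc i = ys ! Suc i" using True by (simp_all add: cs_def)
      ultimately show ?thesis using cons[of i] True j by simp
    next
      case False
      then have ij: "i = j" using i lcs by simp
      then have "Suc i mod length cs = 0" using lcs by simp
      moreover have "cs ! i = z" "cs ! 0 = ys ! 0" using ij j by (simp_all add: cs_def)
      ultimately show ?thesis using zF by simp
    qed
  qed
  then show ?thesis by blast
qed

lemma cycle_mono: "is_cycle_list F xs \<Longrightarrow> (\<And>x y. F x y \<Longrightarrow> E x y) \<Longrightarrow> is_cycle_list E xs"
  unfolding is_cycle_list_def by blast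

definition hdE :: "('v \<Rightarrow> 'v \<Rightarrow> bool) \<Rightarrow> 'v set \<Rightarrow> 'v" where
  "hdE E e = fst (SOME p. E (fst p) (snd p) \<and> e = {fst p, snd p})"
definition tlE :: "('v \<Rightarrow> 'v \<Rightarrow> bool) \<Rightarrow> 'v set \<Rightarrow> 'v" where
  "tlE E e = snd (SOME p. E (fst p) (snd p) \<and> e = {fst p, snd p})"

lemma ori:
  assumes G: "simple_graph V E" and e: "e \<in> edges V E"
  shows "E (hdE E e) (tlE E e) \<and> e = {hdE E e, tlE E e}"
proof -
  obtain x y where "e = {x, y}" "E x y" using edge_pair[OF G e] by metis
  then have "\<exists>p. E (fst p) (snd p) \<and> e = {fst p, snd p}" by (intro exI[of _ "(x, y)"]) simp
  from someI_ex[OF this] show ?thesis unfolding hdE_def tlE_def .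
qed

definition Tt :: "'v set \<Rightarrow> ('v \<Rightarrow> 'v \<Rightarrow> bool) \<Rightarrow> ('v set \<Rightarrow> 'f::field) \<Rightarrow> ('v \<Rightarrow> 'f)" where
  "Tt V E l = (\<lambda>x. if x \<in> V then sum l {e \<in> edges V E. hdE E e = x} - sum l {e \<in> edges V E. tlE E e = x} else 0)"

lemma glin_Tt: "glin (Tt V E)"
  unfolding glin_def Tt_def by (auto simp: fun_eq_iff sum.distrib sum_distrib_left algebra_simps)

lemma Tt_sum:
  assumes G: "simple_graph V E"
  shows "(\<Sum>x\<in>V. Tt V E l x) = 0"
proof -
  have fV: "finite V" by (rule sg_fin[OF G])
  have fE: "finite (edges V E)" by (rule finite_edges[OF G])
  have hV: "hdE E ` edges V E \<subseteq> V" using ori[OF G] sg_V1[OF G] by blast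
  have tV: "tlE E ` edges V E \<subseteq> V" using ori[OF G] sg_V2[OF G] by blast
  have "(\<Sum>x\<in>V. Tt V E l x) = (\<Sum>x\<in>V. sum l {e \<in> edges V E. hdE E e = x} - sum l {e \<in> edges V E. tlE E e = x})"
    by (rule sum.cong) (auto simp: Tt_def)
  also have "\<dots> = (\<Sum>x\<in>V. sum l {e \<in> edges V E. hdE E e = x}) - (\<Sum>x\<in>V. sum l {e \<in> edges V E. tlE E e = x})"
    by (rule sum_subtractf)
  also have "\<dots> = sum l (edges V E) - sum l (edges V E)"
    using sum.group[OF fE fV hV, of l] sum.group[OF fE fV tV, of l] by simp
  finally show ?thesis by simp
qed

lemma flow_exists:
  assumes G: "simple_graph V E" and ne: "V \<noteq> {}" and le: "card V \<le> card (edges V E)"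
  shows "\<exists>l :: 'v set \<Rightarrow> 'f::field. l \<in> vecs (edges V E) \<and> l \<noteq> 0 \<and> (\<forall>x\<in>V. Tt V E l x = 0)"
proof (rule ccontr)
  assume H0: "\<not> ?thesis"
  have H: "l = 0" if "l \<in> vecs (edges V E)" "\<forall>x\<in>V. Tt V E l x = (0::'f)" for l :: "'v set \<Rightarrow> 'f"
    using H0 that by blast
  obtain v1 where v1: "v1 \<in> V" using ne by blast
  have fV: "finite V" by (rule sg_fin[OF G])
  define f :: "('v set \<Rightarrow> 'f) \<Rightarrow> ('v \<Rightarrow> 'f)" where "f = (\<lambda>l x. if x = v1 then 0 else Tt V E l x)"
  have gl: "glin f" unfolding f_def glin_def
    by (auto simp: fun_eq_iff glin_add[OF glin_Tt] glin_scale[OF glin_Tt])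
  have "card (edges V E) \<le> card (V - {v1})"
  proof (rule card_le_inj[OF finite_edges[OF G] _ gl])
    show "finite (V - {v1})" using fV by simp
  next
    fix l :: "'v set \<Rightarrow> 'f" assume "l \<in> vecs (edges V E)"
    show "f l \<in> vecs (V - {v1})" by (auto simp: vecs_def f_def Tt_def)
  next
    fix l :: "'v set \<Rightarrow> 'f" assume l: "l \<in> vecs (edges V E)" and fl: "f l = 0"
    have o: "Tt V E l x = 0" if "x \<in> V - {v1}" for x
      using fun_cong[OF fl, of x] that by (simp add: f_def)
    have "0 = (\<Sum>x\<in>V. Tt V E l x)" using Tt_sum[OF G] by simp
    also have "\<dots> = Tt V E l v1 + (\<Sum>x\<in>V - {v1}. Tt V E l x)" using fV v1 by (simp add: sum.remove)
    also have "(\<Sum>x\<in>V - {v1}. Tt V E l x) = 0" using o by simp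
    finally have "Tt V E l v1 = 0" by simp
    then have "\<forall>x\<in>V. Tt V E l x = 0" using o by blast
    then show "l = 0" by (rule H[OF l])
  qed
  also have "\<dots> < card V"
  proof -
    have "0 < card V" using fV v1 by (auto simp: card_gt_0_iff)
    moreover have "card (V - {v1}) = card V - 1" using fV v1 by (simp add: card_Diff_singleton)
    ultimately show ?thesis by linarith
  qed
  finally show False using le by simp
qed

lemma deg2:
  fixes l :: "'v set \<Rightarrow> 'f::field"
  assumes G: "simple_graph V E" and T: "\<forall>x\<in>V. Tt V E l x = 0" and xy: "E x y" "l {x, y} \<noteq> 0"
  shows "\<exists>z. E y z \<and> l {y, z} \<noteq> 0 \<and> z \<noteq> x"
proof (rule ccontr)
  assume "\<not> ?thesis"
  then have none: "\<And>z. E y z \<Longrightarrow> l {y, z} \<noteq> 0 \<Longrightarrow> z = x" by blast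
  define e0 where "e0 = {x, y}"
  have e0E: "e0 \<in> edges V E" unfolding e0_def by (rule edgesI[OF G xy(1)])
  have fE: "finite (edges V E)" by (rule finite_edges[OF G])
  have Z: "l e = 0" if e: "e \<in> edges V E" "y \<in> e" "e \<noteq> e0" for e
  proof -
    obtain h t where ht: "E h t" "e = {h, t}" using ori[OF G e(1)] by blast
    show ?thesis
    proof (cases "y = h")
      case True
      then have "E y t" "e = {y, t}" using ht by auto
      then show ?thesis using none[of t] e(3) unfolding e0_def by (auto simp: insert_commute)
    next
      case False
      then have "y = t" using e(2) ht(2) by auto
      then have "E y h" "e = {y, h}" using ht sg_sym[OF G ht(1)] by (auto simp: insert_commute)
      then show ?thesis using none[of h] e(3) unfolding e0_def by (auto simp: insert_commute)
    qed
  qed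
  let ?H = "{e \<in> edges V E. hdE E e = y}"
  let ?T = "{e \<in> edges V E. tlE E e = y}"
  have sH: "sum l ?H = (if e0 \<in> ?H then l e0 else 0)"
  proof -
    have "sum l ?H = (\<Sum>e\<in>?H. if e = e0 then l e0 else 0)"
    proof (rule sum.cong)
      fix e assume "e \<in> ?H"
      then have "e \<in> edges V E" "y \<in> e" using ori[OF G] by auto
      then show "l e = (if e = e0 then l e0 else 0)" using Z by auto
    qed simp
    also have "\<dots> = (if e0 \<in> ?H then l e0 else 0)" using fE by (simp add: sum.delta')
    finally show ?thesis .
  qed
  have sT: "sum l ?T = (if e0 \<in> ?T then l e0 else 0)"
  proof -
    have "sum l ?T = (\<Sum>e\<in>?T. if e = e0 then l e0 else 0)"
    proof (rule sum.cong)
      fix e assume "e \<in> ?T"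
      then have "e \<in> edges V E" "y \<in> e" using ori[OF G] by auto
      then show "l e = (if e = e0 then l e0 else 0)" using Z by auto
    qed simp
    also have "\<dots> = (if e0 \<in> ?T then l e0 else 0)" using fE by (simp add: sum.delta')
    finally show ?thesis .
  qed
  have yV: "y \<in> V" by (rule sg_V2[OF G xy(1)])
  have "Tt V E l y = 0" using T yV by blast
  then have eq: "(if e0 \<in> ?H then l e0 else 0) - (if e0 \<in> ?T then l e0 else 0) = 0"
    using yV sH sT by (simp add: Tt_def)
  have o: "E (hdE E e0) (tlE E e0)" "e0 = {hdE E e0, tlE E e0}" using ori[OF G e0E] by auto
  have ne: "hdE E e0 \<noteq> tlE E e0" by (rule sg_irr[OF G o(1)])
  have l0: "l e0 \<noteq> 0" using xy(2) e0_def by simp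
  have "y \<in> e0" unfolding e0_def by simp
  then have "y = hdE E e0 \<or> y = tlE E e0" using o(2) by blast
  then show False
  proof
    assume "y = hdE E e0"
    then have "e0 \<in> ?H" "e0 \<notin> ?T" using e0E ne by auto
    then show False using eq l0 by simp
  next
    assume "y = tlE E e0"
    then have "e0 \<notin> ?H" "e0 \<in> ?T" using e0E ne by auto
    then show False using eq l0 by simp
  qed
qed

lemma cycle_exists:
  fixes dummy :: "'f::field" and V :: "'v set"
  assumes G: "simple_graph V E" and ne: "V \<noteq> {}" and le: "card V \<le> card (edges V E)"
  shows "\<exists>xs. is_cycle_list E xs"
proof -
  obtain l :: "'v set \<Rightarrow> 'f" where l: "l \<in> vecs (edges V E)" "l \<noteq> 0" "\<forall>x\<in>V. Tt V E l x = 0"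
    using flow_exists[OF G ne le] by blast
  obtain e where e: "l e \<noteq> 0" using l(2) by (auto simp: fun_eq_iff)
  then have eE: "e \<in> edges V E" using l(1) by (auto simp: vecs_def)
  obtain a b where ab: "e = {a, b}" "E a b" using edge_pair[OF G eE] by metis
  define F where "F = (\<lambda>x y. E x y \<and> l {x, y} \<noteq> 0)"
  have FF: "x \<in> V \<and> y \<in> V \<and> x \<noteq> y \<and> F y x" if "F x y" for x y
  proof -
    from that have xy: "E x y" "l {x, y} \<noteq> 0" by (simp_all add: F_def)
    show ?thesis using sg_V1[OF G xy(1)] sg_V2[OF G xy(1)] sg_irr[OF G xy(1)] sg_sym[OF G xy(1)] xy(2)
      by (simp add: F_def insert_commute)
  qed
  have "\<exists>xs. is_cycle_list F xs"
  proof (rule maxpath_cycle[OF sg_fin[OF G] FF])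
    show "F a b" using ab e unfolding F_def by simp
    fix x y assume "F x y"
    then show "\<exists>z. F y z \<and> z \<noteq> x" using deg2[OF G l(3)] unfolding F_def by blast
  qed (assumption)
  then show ?thesis using cycle_mono[of F _ E] unfolding F_def by blast
qed

lemma dsum:
  fixes a b :: "'i \<Rightarrow> 'f::field"
  assumes "finite A" "c \<in> A"
  shows "(\<Sum>x\<in>A. \<Sum>y\<in>A. a x * b y * (if x = c \<and> y = c then 1 else 0)) = a c * b c"
proof -
  have "(\<Sum>x\<in>A. \<Sum>y\<in>A. a x * b y * (if x = c \<and> y = c then 1 else 0))
      = (\<Sum>x\<in>A. if x = c then a c * b c else 0)"
  proof (rule sum.cong[OF refl])
    fix x assume "x \<in> A"
    have "(\<Sum>y\<in>A. a x * b y * (if x = c \<and> y = c then 1 else 0))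
        = (\<Sum>y\<in>A. if y = c then (if x = c then a c * b c else 0) else 0)"
      by (rule sum.cong) auto
    also have "\<dots> = (if x = c then a c * b c else 0)" using assms by simp
    finally show "(\<Sum>y\<in>A. a x * b y * (if x = c \<and> y = c then 1 else 0)) = (if x = c then a c * b c else 0)" .
  qed
  also have "\<dots> = a c * b c" using assms by simp
  finally show ?thesis .
qed

lemma nprod_On:
  fixes a b :: "nat \<Rightarrow> 'f::field"
  shows "nprod (On n :: (nat, nat, 'f) nalg) a b = (\<lambda>j. if j < n then a j * b j else 0)"
proof
  fix j
  show "nprod (On n :: (nat, nat, 'f) nalg) a b j = (if j < n then a j * b j else 0)"
  proof (cases "j < n")
    case True
    have "nprod (On n :: (nat, nat, 'f) nalg) a b j
        = (\<Sum>x\<in>{..<n}. \<Sum>y\<in>{..<n}. a x * b y * (if x = j \<and> y = j then 1 else 0))"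
      using True unfolding nprod_def On_def by (auto intro!: sum.cong)
    also have "\<dots> = a j * b j" using True by (intro dsum) auto
    finally show ?thesis using True by simp
  qed (simp add: nprod_def On_def)
qed

lemma sc_S:
  "sc (nalg_sum (F0 :: (unit, nat, 'f::field) nalg) (On n)) x y (Inr j) = (if x = Inr j \<and> y = Inr j then 1 else 0)"
  by (cases x; cases y) (auto simp: nalg_sum_def On_def)

lemma UI_S: "UI (nalg_sum (F0 :: (unit, nat, 'f::field) nalg) (On n)) = Inl ` {()} \<union> Inr ` {..<n}"
  by (simp add: nalg_sum_def F0_def On_def)

lemma ZI_S: "ZI (nalg_sum (F0 :: (unit, nat, 'f::field) nalg) (On n)) = Inr ` {..<n}"
  by (simp add: nalg_sum_def F0_def On_def)

lemma nprod_S: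
  fixes a b :: "unit + nat \<Rightarrow> 'f::field"
  shows "nprod (nalg_sum (F0 :: (unit, nat, 'f) nalg) (On n)) a b
     = (\<lambda>i. case i of Inl _ \<Rightarrow> 0 | Inr j \<Rightarrow> if j < n then a (Inr j) * b (Inr j) else 0)"
proof
  fix i
  show "nprod (nalg_sum (F0 :: (unit, nat, 'f) nalg) (On n)) a b i
     = (case i of Inl _ \<Rightarrow> 0 | Inr j \<Rightarrow> if j < n then a (Inr j) * b (Inr j) else 0)"
  proof (cases "i \<in> Inr ` {..<n}")
    case False
    then show ?thesis by (cases i) (auto simp: nprod_def ZI_S)
  next
    case True
    then obtain j where j: "i = Inr j" "j < n" by auto
    let ?U = "Inl ` {()} \<union> Inr ` {..<n} :: (unit + nat) set"
    have "nprod (nalg_sum (F0 :: (unit, nat, 'f) nalg) (On n)) a b i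
        = (\<Sum>x\<in>?U. \<Sum>y\<in>?U. a x * b y * (if x = Inr j \<and> y = Inr j then 1 else 0))"
      using True j unfolding nprod_def UI_S ZI_S by (simp add: sc_S)
    also have "\<dots> = a (Inr j) * b (Inr j)" using j by (intro dsum) auto
    finally show ?thesis using j by simp
  qed
qed

lemma fdim_zero: "fdim {0 :: 'v \<Rightarrow> 'f::field} = 0"
proof -
  have "fv.dim {0 :: 'v \<Rightarrow> 'f} = card ({} :: ('v \<Rightarrow> 'f) set)"
    by (rule fv.dim_eq_card) (simp_all add: fv.independent_empty)
  then show ?thesis unfolding fdim_def by simp
qed

lemma fdim_line:
  fixes k :: "'v \<Rightarrow> 'f::field"
  assumes "k \<noteq> 0"
  shows "fdim (range (\<lambda>c. (\<lambda>x. c * k x))) = 1"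
proof -
  have "range (\<lambda>c. (\<lambda>x. c * k x)) = fv.span {k}" by (simp add: fv.span_singleton)
  then have "fdim (range (\<lambda>c. (\<lambda>x. c * k x))) = fv.dim {k}" unfolding fdim_def by simp
  also have "\<dots> = card {k}"
  proof (rule fv.dim_eq_card_independent)
    show "fv.independent {k}" using assms by (simp add: fv.independent_insert fv.span_empty)
  qed
  finally show ?thesis by simp
qed

theorem theorem6p3:
  fixes V :: "'v set" and E :: "'v \<Rightarrow> 'v \<Rightarrow> bool"
  assumes char: "(2::'f::field) \<noteq> 0"
    and G: "simple_graph V E"
    and conn: "connected_graph V E"
    and esq: "edge_square TYPE('f) V E"
  defines "p \<equiv> card V" and "q \<equiv> card (edges V E)"
  shows "(q = p - 1 \<or> q = p)
    \<and> (q = p - 1 \<longrightarrow>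
          nalg_iso (graph_alg V E :: ('v, 'v set, 'f) nalg) (nalg_sum (F0 :: (unit, nat, 'f) nalg) (On (p - 1)))
          \<and> fdim (ann_graph TYPE('f) V E) = 1
          \<and> is_tree V E)
    \<and> (q = p \<longrightarrow>
          nalg_iso (graph_alg V E :: ('v, 'v set, 'f) nalg) (On p :: (nat, nat, 'f) nalg)
          \<and> fdim (ann_graph TYPE('f) V E) = 0
          \<and> unicyclic V E \<and> (\<forall>C \<in> cycles E. odd (card C)))"
proof -
  let ?Ed = "edges V E"
  have fV: "finite V" by (rule sg_fin[OF G])
  have fE: "finite ?Ed" by (rule finite_edges[OF G])
  have ne: "V \<noteq> {}" using conn by (simp add: connected_graph_def)
  obtain v0 where v0: "v0 \<in> V" using ne by blast
  have R: "\<forall>x\<in>V. E\<^sup>*\<^sup>* v0 x" using conn_reach[OF conn v0] by blast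
  have p1: "1 \<le> p" using fV ne unfolding p_def by (simp add: Suc_leI card_gt_0_iff)
  have surj: "\<And>z. z \<in> vecs ?Ed \<Longrightarrow> \<exists>u\<in>vecs V. inc V E u = (z :: 'v set \<Rightarrow> 'f)"
    using surj_inc[OF G esq] by blast
  have qp: "q \<le> p" unfolding p_def q_def by (rule card_le_surj[OF fV fE glin_inc surj])
  have pq: "p \<le> q + 1" unfolding p_def q_def by (rule card_lower[OF G v0 R])
  have oddc: "\<And>xs. is_cycle_list E xs \<Longrightarrow> odd (length xs)" using odd_cycles[OF G esq] by blast
  have oddC: "\<forall>C\<in>cycles E. odd (card C)"
  proof
    fix C assume "C \<in> cycles E"
    then obtain xs where c: "is_cycle_list E xs" "C = cycle_edges xs" unfolding cycles_def by blast
    have "card C = length xs" unfolding c(2) by (rule card_cyc[OF c(1)])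
    then show "odd (card C)" using oddc[OF c(1)] by simp
  qed
  have annE: "ann_graph TYPE('f) V E = {u \<in> vecs V. inc V E u = 0}" by (rule ann_eq[OF G])
  have ker0: "\<And>u. u \<in> vecs V \<Longrightarrow> inc V E u = (0::'v set \<Rightarrow> 'f) \<Longrightarrow> u v0 = 0 \<Longrightarrow> u = 0"
    using ker_zero[OF G R] by blast
  obtain \<sigma> where \<sigma>: "bij_betw \<sigma> {0..<q} ?Ed" using ex_bij_betw_nat_finite[OF fE] unfolding q_def by blast
  define \<tau> where "\<tau> = inv_into {0..<q} \<sigma>"
  have st: "\<sigma> (\<tau> e) = e \<and> \<tau> e < q" if "e \<in> ?Ed" for e
  proof
    show "\<sigma> (\<tau> e) = e" unfolding \<tau>_def by (rule bij_betw_inv_into_right[OF \<sigma> that])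
    have "\<tau> e \<in> {0..<q}" unfolding \<tau>_def by (rule bij_betw_apply[OF bij_betw_inv_into[OF \<sigma>] that])
    then show "\<tau> e < q" by simp
  qed
  have ts: "\<tau> (\<sigma> j) = j \<and> \<sigma> j \<in> ?Ed" if "j < q" for j
  proof
    have j: "j \<in> {0..<q}" using that by simp
    show "\<tau> (\<sigma> j) = j" unfolding \<tau>_def by (rule bij_betw_inv_into_left[OF \<sigma> j])
    show "\<sigma> j \<in> ?Ed" by (rule bij_betw_apply[OF \<sigma> j])
  qed
  have inc_eqI: "inc V E u = inc V E w" if "\<And>j. j < q \<Longrightarrow> inc V E u (\<sigma> j) = inc V E w (\<sigma> j)"
    for u w :: "'v \<Rightarrow> 'f"
  proof
    fix e show "inc V E u e = inc V E w e"
    proof (cases "e \<in> ?Ed")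
      case True then show ?thesis using that[of "\<tau> e"] st[OF True] by simp
    qed (simp add: inc_def)
  qed
  have UIG: "UI (graph_alg V E :: ('v, 'v set, 'f) nalg) = V" by (simp add: graph_alg_def)
  have ZIG: "ZI (graph_alg V E :: ('v, 'v set, 'f) nalg) = ?Ed" by (simp add: graph_alg_def)

  have case1: "nalg_iso (graph_alg V E :: ('v, 'v set, 'f) nalg) (On p :: (nat, nat, 'f) nalg)
          \<and> fdim (ann_graph TYPE('f) V E) = 0 \<and> unicyclic V E" if qeq: "q = p"
  proof -
    have kertriv: "k = 0" if k: "k \<in> vecs V" "inc V E k = (0 :: 'v set \<Rightarrow> 'f)" for k
    proof (rule ccontr)
      assume "k \<noteq> 0"
      then obtain v1 where kv1: "k v1 \<noteq> 0" by (auto simp: fun_eq_iff)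
      then have v1: "v1 \<in> V" using k(1) by (auto simp: vecs_def)
      have "card ?Ed \<le> card (V - {v1})"
      proof (rule card_le_surj[OF _ fE glin_inc])
        show "finite (V - {v1})" using fV by simp
        fix z :: "'v set \<Rightarrow> 'f" assume "z \<in> vecs ?Ed"
        then obtain u where u: "u \<in> vecs V" "inc V E u = z" using surj by blast
        define u' where "u' = u - (\<lambda>x. (u v1 / k v1) * k x)"
        have "u' \<in> vecs (V - {v1})" using u(1) k(1) kv1 by (auto simp: vecs_def u'_def)
        moreover have "inc V E u' = z"
          unfolding u'_def glin_diff[OF glin_inc] glin_scale[OF glin_inc] using u(2) k(2) by (simp add: fun_eq_iff)
        ultimately show "\<exists>u\<in>vecs (V - {v1}). inc V E u = z" by blast
      qed
      then have "q \<le> p - 1" unfolding p_def q_def using fV v1 by (simp add: card_Diff_singleton)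
      then show False using qeq p1 by simp
    qed
    have ann0: "ann_graph TYPE('f) V E = {0}"
      unfolding annE using kertriv glin_0[OF glin_inc, of V E] by auto
    define f :: "('v \<Rightarrow> 'f) \<Rightarrow> (nat \<Rightarrow> 'f)" where "f = (\<lambda>u j. if j < p then inc V E u (\<sigma> j) else 0)"
    define g :: "('v set \<Rightarrow> 'f) \<Rightarrow> (nat \<Rightarrow> 'f)" where "g = (\<lambda>z j. if j < p then z (\<sigma> j) else 0)"
    have glf: "glin f" unfolding glin_def f_def
      by (auto simp: fun_eq_iff glin_add[OF glin_inc] glin_scale[OF glin_inc])
    have glg: "glin g" unfolding glin_def g_def by (auto simp: fun_eq_iff algebra_simps)
    have bf: "bij_betw f (vecs V) (vecs {..<p})"
      unfolding bij_betw_def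
    proof
      show "inj_on f (vecs V)"
      proof (rule inj_onI)
        fix u w assume u: "u \<in> vecs V" and w: "w \<in> vecs V" and eq: "f u = f w"
        have "inc V E u = inc V E w"
        proof (rule inc_eqI)
          fix j assume "j < q"
          then show "inc V E u (\<sigma> j) = inc V E w (\<sigma> j)" using fun_cong[OF eq, of j] qeq by (simp add: f_def)
        qed
        then have "inc V E (u - w) = 0" by (simp add: glin_diff[OF glin_inc])
        then have "u - w = 0" using kertriv vecs_diff[OF u w] by blast
        then show "u = w" by simp
      qed
      show "f ` vecs V = vecs {..<p}"
      proof
        show "f ` vecs V \<subseteq> vecs {..<p}" by (auto simp: f_def vecs_def)
        show "vecs {..<p} \<subseteq> f ` vecs V"
        proof
          fix t :: "nat \<Rightarrow> 'f" assume t: "t \<in> vecs {..<p}"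
          define z where "z = (\<lambda>e. if e \<in> ?Ed then t (\<tau> e) else 0)"
          have "z \<in> vecs ?Ed" by (simp add: z_def vecs_def)
          then obtain u where u: "u \<in> vecs V" "inc V E u = z" using surj by blast
          have "f u = t"
          proof
            fix j show "f u j = t j"
            proof (cases "j < p")
              case True then show ?thesis using ts[of j] qeq by (simp add: f_def u(2) z_def)
            next
              case False then show ?thesis using t by (simp add: f_def vecs_def)
            qed
          qed
          then show "t \<in> f ` vecs V" using u(1) by blast
        qed
      qed
    qed
    have bg: "bij_betw g (vecs ?Ed) (vecs {..<p})"
      unfolding bij_betw_def
    proof
      show "inj_on g (vecs ?Ed)"
      proof (rule inj_onI)
        fix z w assume z: "z \<in> vecs ?Ed" and w: "w \<in> vecs ?Ed" and eq: "g z = g w"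
        show "z = w"
        proof
          fix e show "z e = w e"
          proof (cases "e \<in> ?Ed")
            case True then show ?thesis using fun_cong[OF eq, of "\<tau> e"] st[OF True] qeq by (simp add: g_def)
          next
            case False then show ?thesis using z w by (simp add: vecs_def)
          qed
        qed
      qed
      show "g ` vecs ?Ed = vecs {..<p}"
      proof
        show "g ` vecs ?Ed \<subseteq> vecs {..<p}" by (auto simp: g_def vecs_def)
        show "vecs {..<p} \<subseteq> g ` vecs ?Ed"
        proof
          fix t :: "nat \<Rightarrow> 'f" assume t: "t \<in> vecs {..<p}"
          define z where "z = (\<lambda>e. if e \<in> ?Ed then t (\<tau> e) else 0)"
          have zv: "z \<in> vecs ?Ed" by (simp add: z_def vecs_def)
          have "g z = t"
          proof
            fix j show "g z j = t j"
            proof (cases "j < p")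
              case True then show ?thesis using ts[of j] qeq by (simp add: g_def z_def)
            next
              case False then show ?thesis using t by (simp add: g_def vecs_def)
            qed
          qed
          then show "t \<in> g ` vecs ?Ed" using zv by blast
        qed
      qed
    qed
    have pr: "\<forall>u\<in>vecs V. \<forall>w\<in>vecs V. g (nprod (graph_alg V E) u w) = nprod (On p) (f u) (f w)"
      by (simp add: nprod_graph[OF G] nprod_On f_def g_def fun_eq_iff)
    have iso: "nalg_iso (graph_alg V E :: ('v, 'v set, 'f) nalg) (On p :: (nat, nat, 'f) nalg)"
      unfolding nalg_iso_def UIG ZIG
      using glin_lin_on[OF glf] glin_lin_on[OF glg] bf bg pr by (auto simp: On_def)
    obtain xs1 where c1: "is_cycle_list E xs1"
      using cycle_exists[OF G ne] qeq unfolding p_def q_def by auto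
    have uni: "C = cycle_edges xs1" if Cin: "C \<in> cycles E" for C
    proof (rule ccontr)
      assume neq: "C \<noteq> cycle_edges xs1"
      obtain xs2 where c2: "is_cycle_list E xs2" "C = cycle_edges xs2" using Cin unfolding cycles_def by blast
      have "card V + 1 \<le> card ?Ed"
      proof (cases "cycle_edges xs1 \<subseteq> C")
        case True
        then obtain e where "e \<in> cycle_edges xs2" "e \<notin> cycle_edges xs1" using neq c2 by blast
        then show ?thesis using unique_bound[OF G v0 R c2(1) c1] by blast
      next
        case False
        then obtain e where "e \<in> cycle_edges xs1" "e \<notin> cycle_edges xs2" using c2 by blast
        then show ?thesis using unique_bound[OF G v0 R c1 c2(1)] by blast
      qed
      then show False using qeq unfolding p_def q_def by simp
    qed
    have "unicyclic V E" unfolding unicyclic_def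
    proof (intro conjI conn ex1I)
      show "cycle_edges xs1 \<in> cycles E" using c1 unfolding cycles_def by blast
    qed (rule uni)
    then show ?thesis using iso ann0 fdim_zero by simp
  qed

  have case2: "nalg_iso (graph_alg V E :: ('v, 'v set, 'f) nalg) (nalg_sum (F0 :: (unit, nat, 'f) nalg) (On (p - 1)))
          \<and> fdim (ann_graph TYPE('f) V E) = 1 \<and> is_tree V E" if qeq: "q = p - 1"
  proof -
    have "\<exists>k\<in>vecs V. inc V E k = (0 :: 'v set \<Rightarrow> 'f) \<and> k \<noteq> 0"
    proof (rule ccontr)
      assume H: "\<not> ?thesis"
      have "card V \<le> card ?Ed"
      proof (rule card_le_inj[OF fV fE glin_inc])
        fix u :: "'v \<Rightarrow> 'f" assume "u \<in> vecs V"
        show "inc V E u \<in> vecs ?Ed" by (rule inc_vecs)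
      next
        fix u :: "'v \<Rightarrow> 'f" assume "u \<in> vecs V" "inc V E u = 0"
        then show "u = 0" using H by blast
      qed
      then show False using qeq p1 unfolding p_def q_def by simp
    qed
    then obtain k where k: "k \<in> vecs V" "inc V E k = (0 :: 'v set \<Rightarrow> 'f)" "k \<noteq> 0" by blast
    have kv0: "k v0 \<noteq> 0" using ker0[OF k(1) k(2)] k(3) by blast
    define k1 where "k1 = (\<lambda>x. (1 / k v0) * k x)"
    have k1a: "k1 \<in> vecs V" unfolding k1_def by (rule vecs_scale[OF k(1)])
    have k1b: "inc V E k1 = 0" unfolding k1_def glin_scale[OF glin_inc] using k(2) by (simp add: fun_eq_iff)
    have k1c: "k1 v0 = 1" using kv0 by (simp add: k1_def)
    note k1 = k1a k1b k1c
    have k1ne: "k1 \<noteq> 0"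
    proof
      assume "k1 = 0"
      then have "k1 v0 = 0" by simp
      then show False using k1(3) by simp
    qed
    have allk: "u = (\<lambda>x. u v0 * k1 x)" if u: "u \<in> vecs V" "inc V E u = 0" for u
    proof -
      let ?d = "u - (\<lambda>x. u v0 * k1 x)"
      have "?d \<in> vecs V" using u(1) k1(1) by (intro vecs_diff vecs_scale)
      moreover have "inc V E ?d = 0"
        unfolding glin_diff[OF glin_inc] glin_scale[OF glin_inc] using u(2) k1(2) by (simp add: fun_eq_iff)
      moreover have "?d v0 = 0" using k1(3) by simp
      ultimately have "?d = 0" using ker0 by blast
      then show ?thesis by simp
    qed
    have ann1: "ann_graph TYPE('f) V E = range (\<lambda>c. (\<lambda>x. c * k1 x))"
    proof
      show "ann_graph TYPE('f) V E \<subseteq> range (\<lambda>c. (\<lambda>x. c * k1 x))"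
        unfolding annE using allk by blast
      show "range (\<lambda>c. (\<lambda>x. c * k1 x)) \<subseteq> ann_graph TYPE('f) V E"
        unfolding annE using k1(1,2) by (auto simp: vecs_scale glin_scale[OF glin_inc] fun_eq_iff)
    qed
    have dim1: "fdim (ann_graph TYPE('f) V E) = 1" unfolding ann1 by (rule fdim_line[OF k1ne])
    have tree: "is_tree V E" unfolding is_tree_def
    proof (intro conjI conn)
      show "cycles E = {}"
      proof (rule ccontr)
        assume "cycles E \<noteq> {}"
        then obtain xs where c: "is_cycle_list E xs" unfolding cycles_def by blast
        have "k1 = 0" by (rule odd_cycle_ker[OF char G conn c oddc[OF c] k1(1) k1(2)])
        then show False using k1ne by simp
      qed
    qed
    let ?US = "Inl ` {()} \<union> Inr ` {..<q} :: (unit + nat) set"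
    let ?ZS = "Inr ` {..<q} :: (nat + nat) set"
    define f :: "('v \<Rightarrow> 'f) \<Rightarrow> (unit + nat \<Rightarrow> 'f)" where
      "f = (\<lambda>u i. case i of Inl _ \<Rightarrow> u v0 | Inr j \<Rightarrow> if j < q then inc V E u (\<sigma> j) else 0)"
    define g :: "('v set \<Rightarrow> 'f) \<Rightarrow> (nat + nat \<Rightarrow> 'f)" where
      "g = (\<lambda>z i. case i of Inl _ \<Rightarrow> 0 | Inr j \<Rightarrow> if j < q then z (\<sigma> j) else 0)"
    have glf: "glin f" unfolding glin_def f_def
      by (auto simp: fun_eq_iff glin_add[OF glin_inc] glin_scale[OF glin_inc] split: sum.split)
    have glg: "glin g" unfolding glin_def g_def by (auto simp: fun_eq_iff algebra_simps split: sum.split)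
    have bf: "bij_betw f (vecs V) (vecs ?US)"
      unfolding bij_betw_def
    proof
      show "inj_on f (vecs V)"
      proof (rule inj_onI)
        fix u w assume u: "u \<in> vecs V" and w: "w \<in> vecs V" and eq: "f u = f w"
        have "inc V E u = inc V E w"
        proof (rule inc_eqI)
          fix j assume "j < q"
          then show "inc V E u (\<sigma> j) = inc V E w (\<sigma> j)" using fun_cong[OF eq, of "Inr j"] by (simp add: f_def)
        qed
        then have "inc V E (u - w) = 0" by (simp add: glin_diff[OF glin_inc])
        moreover have "(u - w) v0 = 0" using fun_cong[OF eq, of "Inl ()"] by (simp add: f_def)
        ultimately have "u - w = 0" using ker0 vecs_diff[OF u w] by blast
        then show "u = w" by simp
      qed
      show "f ` vecs V = vecs ?US"
      proof
        show "f ` vecs V \<subseteq> vecs ?US" by (auto simp: f_def vecs_def split: sum.split)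
        show "vecs ?US \<subseteq> f ` vecs V"
        proof
          fix t :: "unit + nat \<Rightarrow> 'f" assume t: "t \<in> vecs ?US"
          define z where "z = (\<lambda>e. if e \<in> ?Ed then t (Inr (\<tau> e)) else 0)"
          have "z \<in> vecs ?Ed" by (simp add: z_def vecs_def)
          then obtain u where u: "u \<in> vecs V" "inc V E u = z" using surj by blast
          define u' where "u' = u + (\<lambda>x. (t (Inl ()) - u v0) * k1 x)"
          have u'v: "u' \<in> vecs V" unfolding u'_def using u(1) k1(1) by (intro vecs_add vecs_scale)
          have iu': "inc V E u' = z"
            unfolding u'_def glin_add[OF glin_inc] glin_scale[OF glin_inc] using u(2) k1(2) by (simp add: fun_eq_iff)
          have "f u' = t"
          proof
            fix i show "f u' i = t i"
            proof (cases i)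
              case (Inl x) then show ?thesis using k1(3) by (simp add: f_def u'_def)
            next
              case (Inr j)
              show ?thesis
              proof (cases "j < q")
                case True then show ?thesis using ts[of j] Inr by (simp add: f_def iu' z_def)
              next
                case False then show ?thesis using t Inr by (auto simp: f_def vecs_def)
              qed
            qed
          qed
          then show "t \<in> f ` vecs V" using u'v by blast
        qed
      qed
    qed
    have bg: "bij_betw g (vecs ?Ed) (vecs ?ZS)"
      unfolding bij_betw_def
    proof
      show "inj_on g (vecs ?Ed)"
      proof (rule inj_onI)
        fix z w assume z: "z \<in> vecs ?Ed" and w: "w \<in> vecs ?Ed" and eq: "g z = g w"
        show "z = w"
        proof
          fix e show "z e = w e"
          proof (cases "e \<in> ?Ed")
            case True then show ?thesis using fun_cong[OF eq, of "Inr (\<tau> e)"] st[OF True] by (simp add: g_def)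
          next
            case False then show ?thesis using z w by (simp add: vecs_def)
          qed
        qed
      qed
      show "g ` vecs ?Ed = vecs ?ZS"
      proof
        show "g ` vecs ?Ed \<subseteq> vecs ?ZS" by (auto simp: g_def vecs_def split: sum.split)
        show "vecs ?ZS \<subseteq> g ` vecs ?Ed"
        proof
          fix t :: "nat + nat \<Rightarrow> 'f" assume t: "t \<in> vecs ?ZS"
          define z where "z = (\<lambda>e. if e \<in> ?Ed then t (Inr (\<tau> e)) else 0)"
          have zv: "z \<in> vecs ?Ed" by (simp add: z_def vecs_def)
          have "g z = t"
          proof
            fix i show "g z i = t i"
            proof (cases i)
              case (Inl x) then show ?thesis using t by (auto simp: g_def vecs_def)
            next
              case (Inr j)
              show ?thesis
              proof (cases "j < q")
                case True then show ?thesis using ts[of j] Inr by (simp add: g_def z_def)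
              next
                case False then show ?thesis using t Inr by (auto simp: g_def vecs_def)
              qed
            qed
          qed
          then show "t \<in> g ` vecs ?Ed" using zv by blast
        qed
      qed
    qed
    have pr: "\<forall>u\<in>vecs V. \<forall>w\<in>vecs V. g (nprod (graph_alg V E) u w) = nprod (nalg_sum (F0 :: (unit, nat, 'f) nalg) (On q)) (f u) (f w)"
      by (simp add: nprod_graph[OF G] nprod_S f_def g_def fun_eq_iff split: sum.split)
    have iso: "nalg_iso (graph_alg V E :: ('v, 'v set, 'f) nalg) (nalg_sum (F0 :: (unit, nat, 'f) nalg) (On q))"
      unfolding nalg_iso_def UIG ZIG UI_S ZI_S
      using glin_lin_on[OF glf] glin_lin_on[OF glg] bf bg pr by blast
    show ?thesis using iso dim1 tree qeq by simp
  qed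
  show ?thesis using qp pq case1 case2 oddC by auto
qed

end
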